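(* Let $g$ be a connected graph and $S$ a minimal separator of $g$ that is a clique of $g$. Let $c_1,\dots,c_k$ be the connected components of $g\setminus S$ and $\mathcal{C}(S)=\{g_{|V(c_i)\cup N_g(V(c_i))}: 1\le i\le k\}$. For any two distinct graphs $d_1,d_2\in\mathcal{C}(S)$, the sets of minimal separators of $d_1$ and of $d_2$ are disjoint.
   Context: Graphs are finite, simple and undirected. $g_{|U}$ is the subgraph induced by $U$, $g\setminus S=g_{|V(g)\setminus S}$, and $N_g(U)=\bigcup_{v\in U}N_g(v)\setminus U$. For nodes $u,v$, a set $S\subseteq V(g)$ is a $(u,v)$-separator if $u,v$ lie in distinct connected components of $g\setminus S$; it is a minimal $(u,v)$-separator if no proper subset is one; $S$ is a minimal separator if it is a minimal $(u,v)$-separator for some $u,v$. *)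

theory Defs
  imports Main
begin

text \<open>Induced subgraphs restrict the adjacency relation to the new vertex set, so that
graphs are represented canonically.\<close>

type_synonym 'a graph = "'a set \<times> ('a \<Rightarrow> 'a \<Rightarrow> bool)"

definition verts :: "'a graph \<Rightarrow> 'a set" where "verts g = fst g"
definition adj :: "'a graph \<Rightarrow> 'a \<Rightarrow> 'a \<Rightarrow> bool" where "adj g = snd g"

definition simple_graph :: "'a graph \<Rightarrow> bool" where
  "simple_graph g \<longleftrightarrow> finite (verts g)
     \<and> (\<forall>x y. adj g x y \<longrightarrow> x \<in> verts g \<and> y \<in> verts g)
     \<and> (\<forall>x y. adj g x y \<longrightarrow> adj g y x)
     \<and> (\<forall>x. \<not> adj g x x)"

definition induced :: "'a graph \<Rightarrow> 'a set \<Rightarrow> 'a graph" where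
  "induced g U = (U, \<lambda>x y. x \<in> U \<and> y \<in> U \<and> adj g x y)"

definition remove :: "'a graph \<Rightarrow> 'a set \<Rightarrow> 'a graph" where
  "remove g S = induced g (verts g - S)"

definition nbhd :: "'a graph \<Rightarrow> 'a set \<Rightarrow> 'a set" where
  "nbhd g U = {w. \<exists>v\<in>U. adj g v w} - U"

definition reach :: "'a graph \<Rightarrow> 'a \<Rightarrow> 'a \<Rightarrow> bool" where
  "reach g u v \<longleftrightarrow> u \<in> verts g \<and> v \<in> verts g \<and>
     (\<lambda>x y. x \<in> verts g \<and> y \<in> verts g \<and> adj g x y)\<^sup>*\<^sup>* u v"

definition connected_graph :: "'a graph \<Rightarrow> bool" where
  "connected_graph g \<longleftrightarrow> (\<forall>u\<in>verts g. \<forall>v\<in>verts g. reach g u v)"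

definition components :: "'a graph \<Rightarrow> 'a set set" where
  "components g = {{v. reach g u v} | u. u \<in> verts g}"

definition is_clique :: "'a graph \<Rightarrow> 'a set \<Rightarrow> bool" where
  "is_clique g S \<longleftrightarrow> S \<subseteq> verts g \<and> (\<forall>x\<in>S. \<forall>y\<in>S. x \<noteq> y \<longrightarrow> adj g x y)"

definition separator :: "'a graph \<Rightarrow> 'a set \<Rightarrow> 'a \<Rightarrow> 'a \<Rightarrow> bool" where
  "separator g S u v \<longleftrightarrow> S \<subseteq> verts g \<and> u \<in> verts g - S \<and> v \<in> verts g - S
     \<and> \<not> reach (remove g S) u v"

definition min_separator :: "'a graph \<Rightarrow> 'a set \<Rightarrow> 'a \<Rightarrow> 'a \<Rightarrow> bool" where
  "min_separator g S u v \<longleftrightarrow> separator g S u v \<and> (\<forall>T. T \<subset> S \<longrightarrow> \<not> separator g T u v)"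

definition min_separators :: "'a graph \<Rightarrow> 'a set set" where
  "min_separators g = {S. \<exists>u v. min_separator g S u v}"

definition comp_graphs :: "'a graph \<Rightarrow> 'a set \<Rightarrow> 'a graph set" where
  "comp_graphs g S = {induced g (C \<union> nbhd g C) | C. C \<in> components (remove g S)}"

end

theory Submission
  imports Defs
begin

lemma verts_induced[simp]: "verts (induced g U) = U"
  by (simp add: induced_def verts_def)
lemma adj_induced[simp]: "adj (induced g U) x y = (x \<in> U \<and> y \<in> U \<and> adj g x y)"
  by (simp add: induced_def adj_def)

lemma rtranclp_sym_rev:
  assumes "\<And>x y. R x y \<Longrightarrow> R y x" and "R\<^sup>*\<^sup>* a b"
  shows "R\<^sup>*\<^sup>* b a"
  using assms(2)
proof induction
  case base then show ?case by simp
next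
  case (step y z)
  then show ?case by (meson assms(1) converse_rtranclp_into_rtranclp)
qed

lemma reach_sym:
  assumes "\<And>x y. adj g x y \<Longrightarrow> adj g y x" "reach g u v"
  shows "reach g v u"
  using assms unfolding reach_def
  by (auto intro: rtranclp_sym_rev[where R="\<lambda>x y. x \<in> verts g \<and> y \<in> verts g \<and> adj g x y"])

lemma reach_trans:
  assumes "reach g u v" "reach g v w"
  shows "reach g u w"
  using assms unfolding reach_def by auto

lemma reach_step:
  assumes "reach g u v" "w \<in> verts g" "adj g v w"
  shows "reach g u w"
  using assms unfolding reach_def
  by (auto intro: rtranclp.rtrancl_into_rtrancl)

lemma adj_sym_remove:
  assumes "simple_graph g"
  shows "adj (remove g S) x y \<Longrightarrow> adj (remove g S) y x"
  using assms by (auto simp: remove_def simple_graph_def)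

lemma reach_verts: "reach g u v \<Longrightarrow> u \<in> verts g \<and> v \<in> verts g"
  unfolding reach_def by blast

lemma nbhd_sub:
  assumes sg: "simple_graph g" and C: "C \<in> components (remove g S)"
  shows "nbhd g C \<subseteq> S"
proof
  fix w assume w: "w \<in> nbhd g C"
  obtain u where u: "C = {v. reach (remove g S) u v}"
    using C unfolding components_def by blast
  from w obtain v where v: "v \<in> C" "adj g v w" "w \<notin> C" unfolding nbhd_def by blast
  have ruv: "reach (remove g S) u v" using v(1) u by blast
  show "w \<in> S"
  proof (rule ccontr)
    assume "w \<notin> S"
    moreover have "w \<in> verts g" using sg v(2) unfolding simple_graph_def by blast
    ultimately have wv: "w \<in> verts (remove g S)" by (simp add: remove_def)
    have "v \<in> verts (remove g S)" using reach_verts[OF ruv] by blast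
    then have "adj (remove g S) v w" using wv v(2) by (simp add: remove_def)
    then have "reach (remove g S) u w" using reach_step[OF ruv wv] by blast
    then show False using v(3) u by blast
  qed
qed

lemma comp_disj_S:
  assumes C: "C \<in> components (remove g S)"
  shows "C \<inter> S = {}" "C \<subseteq> verts g"
proof -
  obtain u where u: "C = {v. reach (remove g S) u v}"
    using C unfolding components_def by blast
  have "C \<subseteq> verts (remove g S)"
  proof
    fix y assume "y \<in> C"
    then have "reach (remove g S) u y" using u by blast
    then show "y \<in> verts (remove g S)" using reach_verts[of "remove g S" u y] by blast
  qed
  then show "C \<inter> S = {}" "C \<subseteq> verts g" by (auto simp: remove_def)
qed

lemma comp_eq:
  assumes sg: "simple_graph g" and C1: "C1 \<in> components (remove g S)"
    and C2: "C2 \<in> components (remove g S)" and x: "x \<in> C1" "x \<in> C2"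
  shows "C1 = C2"
proof -
  obtain u1 where u1: "C1 = {v. reach (remove g S) u1 v}"
    using C1 unfolding components_def by blast
  obtain u2 where u2: "C2 = {v. reach (remove g S) u2 v}"
    using C2 unfolding components_def by blast
  have sym: "\<And>a b. reach (remove g S) a b \<Longrightarrow> reach (remove g S) b a"
    by (rule reach_sym[OF adj_sym_remove[OF sg]])
  have r1: "reach (remove g S) u1 x" using x(1) u1 by blast
  have r2: "reach (remove g S) u2 x" using x(2) u2 by blast
  have a: "reach (remove g S) u1 u2" using reach_trans[OF r1 sym[OF r2]] .
  have b: "reach (remove g S) u2 u1" using sym[OF a] .
  show ?thesis unfolding u1 u2
  proof (intro set_eqI iffI)
    fix y assume "y \<in> {v. reach (remove g S) u1 v}"
    then show "y \<in> {v. reach (remove g S) u2 v}" using reach_trans[OF b] by blast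
  next
    fix y assume "y \<in> {v. reach (remove g S) u2 v}"
    then show "y \<in> {v. reach (remove g S) u1 v}" using reach_trans[OF a] by blast
  qed
qed

lemma no_sep:
  assumes sg: "simple_graph g" and C: "C \<in> components (remove g S)"
    and T: "T \<inter> C = {}"
  shows "\<not> separator (induced g (C \<union> nbhd g C)) T a b"
proof
  assume sep: "separator (induced g (C \<union> nbhd g C)) T a b"
  obtain u where u0: "u \<in> verts (remove g S)" and u2: "C = {v. reach (remove g S) u v}"
    using C unfolding components_def by blast
  have u1: "u \<in> verts g - S" using u0 by (simp add: remove_def)
  note u = u1 u2
  define d where "d = induced g (C \<union> nbhd g C)"
  define h where "h = remove d T"
  have vh: "verts h = C \<union> nbhd g C - T" by (simp add: h_def d_def remove_def)
  have ah: "\<And>x y. adj h x y = (x \<in> verts h \<and> y \<in> verts h \<and> adj g x y)"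
    by (auto simp: h_def d_def remove_def)
  have "reach (remove g S) u u" using u0 unfolding reach_def by blast
  then have uC: "u \<in> C" using u2 by blast
  let ?R = "\<lambda>x y. x \<in> verts (remove g S) \<and> y \<in> verts (remove g S) \<and> adj (remove g S) x y"
  let ?R' = "\<lambda>x y. x \<in> verts h \<and> y \<in> verts h \<and> adj h x y"
  have inC: "v \<in> C" if hv: "?R\<^sup>*\<^sup>* u v" for v
  proof -
    have "v = u \<or> v \<in> verts (remove g S)" using hv
      by (induction rule: rtranclp_induct) auto
    then have "v \<in> verts (remove g S)" using u(1) by (auto simp: remove_def)
    then have "reach (remove g S) u v" using hv u(1) by (simp add: reach_def remove_def)
    then show ?thesis using u(2) by simp
  qed
  have lift: "?R\<^sup>*\<^sup>* u v \<Longrightarrow> ?R'\<^sup>*\<^sup>* u v" for v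
  proof (induction rule: rtranclp_induct)
    case base then show ?case by simp
  next
    case (step y z)
    have "y \<in> C" "z \<in> C" using inC step(1) step(1)[THEN rtranclp.rtrancl_into_rtrancl, OF step(2)] by auto
    then have "y \<in> verts h" "z \<in> verts h" using vh T by auto
    moreover have "adj g y z" using step(2) by (auto simp: remove_def)
    ultimately have "?R' y z" using ah by auto
    then show ?case by (rule rtranclp.rtrancl_into_rtrancl[OF step(3)])
  qed
  have uh: "u \<in> verts h" using uC vh T by auto
  have all: "reach h u x" if x: "x \<in> verts h" for x
  proof (cases "x \<in> C")
    case True
    then have "reach (remove g S) u x" using u(2) by blast
    then have "?R\<^sup>*\<^sup>* u x" unfolding reach_def by blast
    then have "?R'\<^sup>*\<^sup>* u x" by (rule lift)
    then show ?thesis using x uh unfolding reach_def by blast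
  next
    case False
    then have "x \<in> nbhd g C" using x vh by auto
    then obtain v where v: "v \<in> C" "adj g v x" by (auto simp: nbhd_def)
    have vh': "v \<in> verts h" using v vh T by auto
    have "reach (remove g S) u v" using u(2) v(1) by blast
    then have "?R\<^sup>*\<^sup>* u v" unfolding reach_def by blast
    then have "?R'\<^sup>*\<^sup>* u v" by (rule lift)
    then have "reach h u v" using vh' uh unfolding reach_def by blast
    moreover have "adj h v x" using ah vh' x v by auto
    ultimately show ?thesis using reach_step[of h u v x] x by blast
  qed
  have symh: "\<And>x y. adj h x y \<Longrightarrow> adj h y x"
    using ah sg by (auto simp: simple_graph_def)
  have "a \<in> verts h" "b \<in> verts h" using sep by (auto simp: separator_def h_def remove_def d_def)
  then have "reach h a b" using reach_trans[OF reach_sym[OF symh all] all] by blast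
  then show False using sep by (simp add: separator_def h_def d_def)
qed

theorem lemma7:
  fixes g :: "'a graph" and S :: "'a set" and d1 d2 :: "'a graph"
  assumes "simple_graph g"
    and "connected_graph g"
    and "S \<in> min_separators g"
    and "is_clique g S"
    and "d1 \<in> comp_graphs g S" and "d2 \<in> comp_graphs g S"
    and "d1 \<noteq> d2"
  shows "min_separators d1 \<inter> min_separators d2 = {}"
proof (rule ccontr)
  assume "min_separators d1 \<inter> min_separators d2 \<noteq> {}"
  then obtain T where m1: "T \<in> min_separators d1" and m2: "T \<in> min_separators d2" by blast
  from m1 obtain a b where "min_separator d1 T a b" unfolding min_separators_def by blast
  then have T1: "separator d1 T a b" unfolding min_separator_def by blast
  from m2 obtain a' b' where "min_separator d2 T a' b'" unfolding min_separators_def by blast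
  then have T2: "separator d2 T a' b'" unfolding min_separator_def by blast
  obtain C1 where C1: "C1 \<in> components (remove g S)" "d1 = induced g (C1 \<union> nbhd g C1)"
    using assms(5) unfolding comp_graphs_def by blast
  obtain C2 where C2: "C2 \<in> components (remove g S)" "d2 = induced g (C2 \<union> nbhd g C2)"
    using assms(6) unfolding comp_graphs_def by blast
  have ne: "C1 \<noteq> C2" using C1(2) C2(2) assms(7) by metis
  have "T \<subseteq> verts d2" using T2 unfolding separator_def by blast
  then have Tsub2: "T \<subseteq> C2 \<union> nbhd g C2" using C2(2) by simp
  have "T \<inter> C1 = {}"
  proof (rule ccontr)
    assume "T \<inter> C1 \<noteq> {}"
    then obtain x where x: "x \<in> T" "x \<in> C1" by blast
    have "nbhd g C2 \<subseteq> S" by (rule nbhd_sub[OF assms(1) C2(1)])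
    moreover have "C1 \<inter> S = {}" by (rule comp_disj_S(1)[OF C1(1)])
    ultimately have "x \<notin> nbhd g C2" using x(2) by blast
    then have "x \<in> C2" using Tsub2 x(1) by blast
    then have "C1 = C2" by (rule comp_eq[OF assms(1) C1(1) C2(1) x(2)])
    then show False using ne by blast
  qed
  then have "\<not> separator (induced g (C1 \<union> nbhd g C1)) T a b" by (rule no_sep[OF assms(1) C1(1)])
  then show False using T1 C1(2) by simp
qed

end
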